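(* Let $X\subseteq\mathbb R^n$ be convex and compact, let $\phi_1,\dots,\phi_m:\mathbb R^n\to\mathbb R$ be convex, let $y\in\mathbb R^n$, $\gamma>0$, and consider $$\min_{u\in X}\ \tfrac1{2\gamma}\|u-y\|^2\quad\text{s.t.}\quad\phi_i(u)\le0,\ i=1,\dots,m,$$ with optimal solution $x^*$. Let $x^\circ\in X$ be strictly feasible, i.e., $\phi_i(x^\circ)<0$ for all $i$. Let $\hat x$ be an $\epsilon$-suboptimal and $\epsilon$-infeasible solution, i.e., $\hat x\in X$, $\big|\frac1{2\gamma}\|\hat x-y\|^2-\frac1{2\gamma}\|x^*-y\|^2\big|\le\epsilon$ and $[\phi_i(\hat x)]_+\le\epsilon$ for all $i$. Let $\kappa=\max_i\frac{[\phi_i(\hat x)]_+}{[\phi_i(\hat x)]_+-\phi_i(x^\circ)}$ and $\tilde x=\kappa x^\circ+(1-\kappa)\hat x$. Then $\tilde x$ is feasible for the problem, and $\tilde x$ is an $\mathcal O(\epsilon)$-approximate solution in the sense that, with $h=\mathbb I_\Theta$ and $\Theta=\{x\in X:\phi_i(x)\le0\ \forall i\}$, $$\tfrac1{2\gamma}\|\tilde x-y\|^2+h(\tilde x)\le\rho+\min_{x\in\mathbb R^n}\Big\{\tfrac1{2\gamma}\|x-y\|^2+h(x)\Big\}\quad\text{with }\rho=\mathcal O(\epsilon).$$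
   Context: $[a]_+=\max\{0,a\}$. $\mathbb I_\Theta$ is the indicator function of $\Theta$: $\mathbb I_\Theta(x)=0$ if $x\in\Theta$ and $+\infty$ otherwise. *)

theory Defs
  imports "HOL-Analysis.Analysis"
begin

definition pos_part :: "real \<Rightarrow> real" where
  "pos_part a = max 0 a"

definition ind_fun :: "'a set \<Rightarrow> 'a \<Rightarrow> ereal" where
  "ind_fun S x = (if x \<in> S then 0 else \<infinity>)"

definition feas_set :: "'a set \<Rightarrow> (nat \<Rightarrow> 'a \<Rightarrow> real) \<Rightarrow> nat \<Rightarrow> 'a set" where
  "feas_set X \<phi> m = {x \<in> X. \<forall>i\<in>{1..m}. \<phi> i x \<le> 0}"

end

theory Submission
  imports Defs
begin

theorem lemma5:
  fixes X :: "'a::euclidean_space set" and \<phi> :: "nat \<Rightarrow> 'a \<Rightarrow> real" and m :: nat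
    and y xstar xo :: 'a and \<gamma> :: real
  assumes "convex X" and "compact X"
    and "\<forall>i\<in>{1..m}. convex_on UNIV (\<phi> i)"
    and "m \<ge> 1"
    and "\<gamma> > 0"
    and "xstar \<in> feas_set X \<phi> m"
    and "\<forall>u\<in>feas_set X \<phi> m. 1/(2*\<gamma>) * (norm (xstar - y))^2 \<le> 1/(2*\<gamma>) * (norm (u - y))^2"
    and "xo \<in> X" and "\<forall>i\<in>{1..m}. \<phi> i xo < 0"
  shows "\<exists>C::real. \<forall>\<epsilon>>0. \<forall>xh.
     xh \<in> X
     \<and> \<bar>1/(2*\<gamma>) * (norm (xh - y))^2 - 1/(2*\<gamma>) * (norm (xstar - y))^2\<bar> \<le> \<epsilon>
     \<and> (\<forall>i\<in>{1..m}. pos_part (\<phi> i xh) \<le> \<epsilon>)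
     \<longrightarrow> (let \<kappa> = Max ((\<lambda>i. pos_part (\<phi> i xh) / (pos_part (\<phi> i xh) - \<phi> i xo)) ` {1..m});
              xt = \<kappa> *\<^sub>R xo + (1 - \<kappa>) *\<^sub>R xh
          in xt \<in> feas_set X \<phi> m
             \<and> ereal (1/(2*\<gamma>) * (norm (xt - y))^2) + ind_fun (feas_set X \<phi> m) xt
               \<le> ereal (C * \<epsilon>) + (INF x. ereal (1/(2*\<gamma>) * (norm (x - y))^2) + ind_fun (feas_set X \<phi> m) x))"
proof -
  define f where "f u = 1/(2*\<gamma>) * (norm (u - y))^2" for u
  define \<Theta> where "\<Theta> = feas_set X \<phi> m"
  obtain B where B: "\<forall>x\<in>X. norm x \<le> B"
    using compact_imp_bounded[OF assms(2)] bounded_iff by blast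
  have B0: "B \<ge> 0" using B assms(8) norm_ge_zero order_trans by blast
  define D where "D = B + norm y"
  have D: "norm (x - y) \<le> D" if "x \<in> X" for x
    using B that norm_triangle_ineq4[of x y] unfolding D_def by fastforce
  have D0: "D \<ge> 0" unfolding D_def using B0 by simp
  define \<delta> where "\<delta> = Min ((\<lambda>i. - \<phi> i xo) ` {1..m})"
  have fin: "finite {1..m}" "{1..m} \<noteq> {}" using assms(4) by auto
  have \<delta>pos: "\<delta> > 0" unfolding \<delta>_def using fin assms(9) by (subst Min_gr_iff) auto
  have \<delta>le: "\<delta> \<le> - \<phi> i xo" if "i \<in> {1..m}" for i
    unfolding \<delta>_def using fin that by (intro Min_le) auto
  have INFge: "ereal (f xstar) \<le> (INF x. ereal (f x) + ind_fun \<Theta> x)"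
  proof (rule INF_greatest)
    fix x
    show "ereal (f xstar) \<le> ereal (f x) + ind_fun \<Theta> x"
      using assms(7) unfolding ind_fun_def f_def \<Theta>_def by auto
  qed
  define C where "C = 1 + 4 * D * B / (2*\<gamma>) / \<delta>"
  show ?thesis
    unfolding f_def[symmetric] \<Theta>_def[symmetric]
  proof (intro exI[of _ C] allI impI)
    fix \<epsilon> :: real and xh
    assume e: "\<epsilon> > 0"
    assume h: "xh \<in> X \<and> \<bar>f xh - f xstar\<bar> \<le> \<epsilon> \<and> (\<forall>i\<in>{1..m}. pos_part (\<phi> i xh) \<le> \<epsilon>)"
    define k where "k i = pos_part (\<phi> i xh) / (pos_part (\<phi> i xh) - \<phi> i xo)" for i
    define \<kappa> where "\<kappa> = Max (k ` {1..m})"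
    define xt where "xt = \<kappa> *\<^sub>R xo + (1 - \<kappa>) *\<^sub>R xh"
    have kprop: "0 \<le> k i \<and> k i < 1 \<and> k i \<le> \<epsilon> / \<delta>" if i: "i \<in> {1..m}" for i
    proof -
      have p0: "pos_part (\<phi> i xh) \<ge> 0" unfolding pos_part_def by simp
      have neg: "\<phi> i xo < 0" using assms(9) i by auto
      have pe: "pos_part (\<phi> i xh) \<le> \<epsilon>" using h i by auto
      have dl: "\<delta> \<le> - \<phi> i xo" using \<delta>le i .
      have den: "pos_part (\<phi> i xh) - \<phi> i xo > 0" using p0 neg by linarith
      have "k i \<le> pos_part (\<phi> i xh) / (- \<phi> i xo)"
        unfolding k_def using p0 neg den by (intro divide_left_mono) (auto intro: mult_pos_neg)
      also have "\<dots> \<le> \<epsilon> / \<delta>"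
        using p0 pe dl \<delta>pos by (intro frac_le) auto
      finally show ?thesis unfolding k_def using p0 den neg by (auto simp: field_simps)
    qed
    have \<kappa>ge: "k i \<le> \<kappa>" if "i \<in> {1..m}" for i
      unfolding \<kappa>_def using fin that by (intro Max_ge) auto
    obtain j where j: "j \<in> {1..m}" "\<kappa> = k j"
    proof -
      have "\<kappa> \<in> k ` {1..m}" unfolding \<kappa>_def using fin by (intro Max_in) auto
      then show ?thesis using that by blast
    qed
    have \<kappa>0: "0 \<le> \<kappa>" "\<kappa> < 1" "\<kappa> \<le> \<epsilon> / \<delta>" using kprop[OF j(1)] j(2) by auto
    have xtX: "xt \<in> X" unfolding xt_def
      using convexD[OF assms(1) assms(8), of xh "\<kappa>" "1 - \<kappa>"] h \<kappa>0 by auto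
    have feas: "\<phi> i xt \<le> 0" if i: "i \<in> {1..m}" for i
    proof -
      have cv: "convex_on UNIV (\<phi> i)" using assms(3) i by auto
      have "\<phi> i xt \<le> \<kappa> * \<phi> i xo + (1 - \<kappa>) * \<phi> i xh"
        unfolding xt_def using convex_onD[OF cv, of "\<kappa>" xh xo] \<kappa>0
        by (simp add: add.commute)
      also have "\<dots> \<le> 0"
      proof (cases "\<phi> i xh \<le> 0")
        case True
        then show ?thesis using \<kappa>0 assms(9) i
          by (smt (verit) mult_nonneg_nonpos mult_nonneg_nonneg)
      next
        case False
        then have pp: "pos_part (\<phi> i xh) = \<phi> i xh" unfolding pos_part_def by simp
        have neg: "\<phi> i xo < 0" using assms(9) i by auto
        have "k i \<le> \<kappa>" using \<kappa>ge i .
        then have "\<phi> i xh / (\<phi> i xh - \<phi> i xo) \<le> \<kappa>" unfolding k_def pp .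
        then have "\<phi> i xh \<le> \<kappa> * (\<phi> i xh - \<phi> i xo)" using False neg
          by (simp add: divide_le_eq)
        then show ?thesis by (simp add: algebra_simps)
      qed
      finally show ?thesis .
    qed
    have xtT: "xt \<in> \<Theta>" unfolding \<Theta>_def feas_set_def using xtX feas by auto
    have "norm (xt - y)^2 - norm (xh - y)^2
        = (norm (xt - y) - norm (xh - y)) * (norm (xt - y) + norm (xh - y))"
      by (simp add: power2_eq_square algebra_simps)
    also have "\<dots> \<le> norm (xt - xh) * (2 * D)"
    proof (rule mult_mono)
      show "norm (xt - y) - norm (xh - y) \<le> norm (xt - xh)"
        using norm_triangle_ineq2[of "xt - y" "xh - y"] by simp
      show "norm (xt - y) + norm (xh - y) \<le> 2 * D" using D[OF xtX] D[of xh] h by simp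
    qed auto
    also have "norm (xt - xh) = \<kappa> * norm (xo - xh)"
    proof -
      have "xt - xh = \<kappa> *\<^sub>R (xo - xh)" unfolding xt_def by (simp add: algebra_simps)
      then show ?thesis using \<kappa>0 by simp
    qed
    finally have d1: "norm (xt - y)^2 - norm (xh - y)^2 \<le> \<kappa> * norm (xo - xh) * (2 * D)" .
    have nb: "norm (xo - xh) \<le> 2 * B"
    proof -
      have "norm xo \<le> B" "norm xh \<le> B" using B assms(8) h by auto
      then show ?thesis using norm_triangle_ineq4[of xo xh] by linarith
    qed
    have "\<kappa> * norm (xo - xh) * (2 * D) \<le> \<kappa> * (2*B) * (2*D)"
      using \<kappa>0 D0 nb by (intro mult_right_mono mult_left_mono) auto
    with d1 have "norm (xt - y)^2 - norm (xh - y)^2 \<le> \<kappa> * (2*B) * (2*D)" by linarith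
    also have "\<dots> \<le> (\<epsilon>/\<delta>) * (2*B) * (2*D)"
      using \<kappa>0 B0 D0 by (intro mult_right_mono) auto
    finally have d: "norm (xt - y)^2 - norm (xh - y)^2 \<le> (\<epsilon>/\<delta>) * (4*B*D)" by (simp add: mult_ac)
    have "f xt - f xh \<le> 1/(2*\<gamma>) * ((\<epsilon>/\<delta>) * (4*B*D))"
      unfolding f_def using d assms(5)
      by (smt (verit) divide_pos_pos mult_left_mono right_diff_distrib)
    also have "\<dots> = \<epsilon> * (4 * D * B / (2*\<gamma>) / \<delta>)" by (simp add: field_simps)
    finally have ft: "f xt - f xh \<le> \<epsilon> * (4 * D * B / (2*\<gamma>) / \<delta>)" .
    have "f xh \<le> \<epsilon> + f xstar" using h by linarith
    with ft have "f xt \<le> C * \<epsilon> + f xstar" unfolding C_def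
      by (simp add: algebra_simps)
    then have "ereal (f xt) + ind_fun \<Theta> xt \<le> ereal (C * \<epsilon>) + ereal (f xstar)"
      using xtT unfolding ind_fun_def by simp
    also have "\<dots> \<le> ereal (C * \<epsilon>) + (INF x. ereal (f x) + ind_fun \<Theta> x)"
      using INFge by (rule add_left_mono)
    finally show "let \<kappa> = Max ((\<lambda>i. pos_part (\<phi> i xh) / (pos_part (\<phi> i xh) - \<phi> i xo)) ` {1..m});
              xt = \<kappa> *\<^sub>R xo + (1 - \<kappa>) *\<^sub>R xh
          in xt \<in> \<Theta> \<and> ereal (f xt) + ind_fun \<Theta> xt
               \<le> ereal (C * \<epsilon>) + (INF x. ereal (f x) + ind_fun \<Theta> x)"
      using xtT unfolding Let_def xt_def[symmetric] \<kappa>_def[symmetric] k_def[symmetric]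
      by (simp add: xt_def \<kappa>_def k_def)
  qed
qed

end
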